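(* Let $(I,\mathscr{I},\nu)$ be a probability space and $\{C_i\}_{i\in I}$ a family of non-empty closed convex subsets of $\mathbb{R}^k$ such that $(i,x)\mapsto P_{C_i}(x)$ is measurable, where $P_{C_i}$ is the Euclidean projection onto $C_i$. Let $$C^\ast=\{x\in\mathbb{R}^k\colon x\in C_i \text{ for } \nu\text{-almost every } i\}$$ and assume $C^\ast\neq\emptyset$. Let $(\xi_n)$ be an ergodic stationary sequence of $I$-valued random variables with distribution $\nu$, let $\alpha\in(0,2)$, and for any $x_0\in\mathbb{R}^k$ define $X_0=x_0$, $X_{n+1}=X_n+\alpha\,(P_{C_{\xi_n}}(X_n)-X_n)$. Then $(X_n)$ converges almost surely to a random variable $X$ with $X\in C^\ast$ almost surely.
   Context: A sequence $(\xi_n)$ is ergodic stationary if its law on $I^{\mathbb{N}}$ is invariant and ergodic under the left shift. *)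

theory Defs
  imports "HOL-Probability.Probability"
begin

definition seq_shift :: "(nat \<Rightarrow> 'i) \<Rightarrow> (nat \<Rightarrow> 'i)" where
  "seq_shift f = (\<lambda>n. f (Suc n))"

definition seq_law :: "'w measure \<Rightarrow> 'i measure \<Rightarrow> (nat \<Rightarrow> 'w \<Rightarrow> 'i) \<Rightarrow> (nat \<Rightarrow> 'i) measure" where
  "seq_law M \<nu> \<xi> = distr M (PiM UNIV (\<lambda>_. \<nu>)) (\<lambda>\<omega> n. \<xi> n \<omega>)"

definition ergodic_stationary :: "'w measure \<Rightarrow> 'i measure \<Rightarrow> (nat \<Rightarrow> 'w \<Rightarrow> 'i) \<Rightarrow> bool" where
  "ergodic_stationary M \<nu> \<xi> \<longleftrightarrow>
     (let L = seq_law M \<nu> \<xi> in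
        distr L (PiM UNIV (\<lambda>_. \<nu>)) seq_shift = L \<and>
        (\<forall>A \<in> sets L. seq_shift -` A \<inter> space L = A \<longrightarrow>
             emeasure L A = 0 \<or> emeasure L A = 1))"

primrec proj_iter :: "('i \<Rightarrow> 'a::euclidean_space set) \<Rightarrow> real \<Rightarrow> 'a \<Rightarrow> (nat \<Rightarrow> 'w \<Rightarrow> 'i) \<Rightarrow> nat \<Rightarrow> 'w \<Rightarrow> 'a" where
  "proj_iter C \<alpha> x0 \<xi> 0 \<omega> = x0"
| "proj_iter C \<alpha> x0 \<xi> (Suc n) \<omega> =
     (let x = proj_iter C \<alpha> x0 \<xi> n \<omega> in x + \<alpha> *\<^sub>R (closest_point (C (\<xi> n \<omega>)) x - x))"

end

theory Submission
  imports Defs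
begin


lemma infdist_closest_point:
  fixes S :: "'a::euclidean_space set"
  assumes "closed S" "S \<noteq> {}"
  shows "infdist x S = dist x (closest_point S x)"
proof (rule antisym)
  show "infdist x S \<le> dist x (closest_point S x)"
    by (rule infdist_le[OF closest_point_in_set[OF assms]])
  show "dist x (closest_point S x) \<le> infdist x S"
    unfolding infdist_notempty[OF assms(2)]
    by (rule cINF_greatest[OF assms(2)]) (rule closest_point_le[OF assms(1)])
qed

lemma aux_ring: "(A::real) = B + 2*a*I + a^2*V \<Longrightarrow> I = -V + J \<Longrightarrow> A = B - a*(2-a)*V + 2*a*J"
  by (simp add: algebra_simps power2_eq_square)

lemma proj_step_ineq:
  fixes S :: "'a::euclidean_space set"
  assumes "closed S" "convex S" "S \<noteq> {}" "z \<in> S" "0 < \<alpha>" "\<alpha> < 2"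
  shows "(norm (x + \<alpha> *\<^sub>R (closest_point S x - x) - z))\<^sup>2
     \<le> (norm (x - z))\<^sup>2 - \<alpha> * (2 - \<alpha>) * (norm (closest_point S x - x))\<^sup>2"
proof -
  define p where "p = closest_point S x"
  have d: "inner (x - p) (z - p) \<le> 0" unfolding p_def by (rule closest_point_dot[OF assms(2,1,4)])
  have e: "x + \<alpha> *\<^sub>R (p - x) - z = (x - z) + \<alpha> *\<^sub>R (p - x)" by (simp add: algebra_simps)
  have "(norm (x + \<alpha> *\<^sub>R (p - x) - z))\<^sup>2 = (norm (x - z))\<^sup>2 + 2 * \<alpha> * inner (x - z) (p - x) + \<alpha>\<^sup>2 * (norm (p - x))\<^sup>2"
    unfolding e power2_norm_eq_inner by (simp add: inner_add_left inner_add_right inner_diff_left inner_diff_right inner_commute[of p x] inner_commute[of z x] inner_commute[of z p] algebra_simps power2_eq_square)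
  moreover have "inner (x - z) (p - x) = - (norm (p - x))\<^sup>2 + inner (x - p) (z - p)"
    by (simp add: power2_norm_eq_inner inner_diff_left inner_diff_right inner_commute[of p x] inner_commute[of z x] inner_commute[of z p] algebra_simps)
  ultimately have "(norm (x + \<alpha> *\<^sub>R (p - x) - z))\<^sup>2 = (norm (x - z))\<^sup>2 - \<alpha> * (2 - \<alpha>) * (norm (p - x))\<^sup>2 + 2 * \<alpha> * inner (x - p) (z - p)"
    using aux_ring by blast
  moreover have "2 * \<alpha> * inner (x - p) (z - p) \<le> 0" using d assms(5)
    by (simp add: mult_nonneg_nonpos)
  ultimately show ?thesis unfolding p_def by linarith
qed

locale det_seq =
  fixes S :: "nat \<Rightarrow> 'a::euclidean_space set" and x :: "nat \<Rightarrow> 'a" and Cs :: "'a set" and \<alpha> :: real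
  assumes S: "\<And>n. closed (S n) \<and> convex (S n) \<and> S n \<noteq> {}"
    and Cs: "\<And>n. Cs \<subseteq> S n"
    and step: "\<And>n. x (Suc n) = x n + \<alpha> *\<^sub>R (closest_point (S n) (x n) - x n)"
    and a0: "0 < \<alpha>" and a2: "\<alpha> < 2"
begin

definition d :: "nat \<Rightarrow> real" where "d n = norm (closest_point (S n) (x n) - x n)"

lemma fejer_sq: "z \<in> Cs \<Longrightarrow> (norm (x (Suc n) - z))\<^sup>2 \<le> (norm (x n - z))\<^sup>2 - \<alpha> * (2 - \<alpha>) * (d n)\<^sup>2"
  unfolding step d_def using S[of n] Cs[of n] a0 a2 by (intro proj_step_ineq) auto

lemma fejer: "z \<in> Cs \<Longrightarrow> norm (x (Suc n) - z) \<le> norm (x n - z)"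
proof -
  assume z: "z \<in> Cs"
  have "0 \<le> \<alpha> * (2 - \<alpha>) * (d n)\<^sup>2" using a0 a2 by simp
  with fejer_sq[OF z, of n] have "(norm (x (Suc n) - z))\<^sup>2 \<le> (norm (x n - z))\<^sup>2" by linarith
  then show ?thesis by (rule power2_le_imp_le) simp
qed

lemma fejer_mono: "z \<in> Cs \<Longrightarrow> m \<le> n \<Longrightarrow> norm (x n - z) \<le> norm (x m - z)"
  using decseqD[OF decseq_SucI[of "\<lambda>n. norm (x n - z)"]] fejer by blast

lemma d_tendsto: assumes "Cs \<noteq> {}" shows "d \<longlonglongrightarrow> 0"
proof -
  obtain z where z: "z \<in> Cs" using assms by auto
  define a where "a n = (norm (x n - z))\<^sup>2" for n
  have "decseq a" unfolding a_def
    by (intro decseq_SucI power_mono fejer[OF z]) simp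
  then obtain l where l: "a \<longlonglongrightarrow> l" using decseq_convergent[of a 0] unfolding a_def by auto
  have dl: "(\<lambda>n. (a n - a (Suc n)) / (\<alpha> * (2 - \<alpha>))) \<longlonglongrightarrow> 0"
  proof -
    have ne: "\<alpha> * (2 - \<alpha>) \<noteq> 0" using a0 a2 by simp
    have "(\<lambda>n. a n - a (Suc n)) \<longlonglongrightarrow> l - l" by (intro tendsto_diff l LIMSEQ_Suc)
    then have "(\<lambda>n. (a n - a (Suc n)) / (\<alpha> * (2 - \<alpha>))) \<longlonglongrightarrow> (l - l) / (\<alpha> * (2 - \<alpha>))"
      by (intro tendsto_divide tendsto_const ne)
    then show ?thesis by simp
  qed
  have c: "0 < \<alpha> * (2 - \<alpha>)" using a0 a2 by simp
  have le: "(d n)\<^sup>2 \<le> (a n - a (Suc n)) / (\<alpha> * (2 - \<alpha>))" for n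
    using fejer_sq[OF z, of n] c unfolding a_def by (simp add: field_simps)
  have "(\<lambda>n. (d n)\<^sup>2) \<longlonglongrightarrow> 0"
    by (rule tendsto_sandwich[OF _ _ tendsto_const dl]) (auto intro: always_eventually le)
  moreover have "(\<lambda>n. sqrt ((d n)\<^sup>2)) = d" by (simp add: d_def fun_eq_iff)
  ultimately show ?thesis using tendsto_real_sqrt[of "\<lambda>n. (d n)\<^sup>2" 0 sequentially] by simp
qed

lemma infdist_dec: assumes "Cs \<noteq> {}" shows "infdist (x (Suc n)) Cs \<le> infdist (x n) Cs"
proof -
  have "infdist (x (Suc n)) Cs \<le> dist (x n) z" if "z \<in> Cs" for z
    using infdist_le[OF that, of "x (Suc n)"] fejer[OF that, of n] by (simp add: dist_norm)
  then show ?thesis unfolding infdist_notempty[OF assms, of "x n"]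
    by (intro cINF_greatest assms)
qed

lemma conv_Cs:
  assumes "Cs \<noteq> {}" "closed Cs" "(\<lambda>n. infdist (x n) Cs) \<longlonglongrightarrow> 0"
  shows "\<exists>X\<in>Cs. x \<longlonglongrightarrow> X"
proof -
  have "Cauchy x"
  proof (rule metric_CauchyI)
    fix e :: real assume e: "0 < e"
    have "eventually (\<lambda>n. infdist (x n) Cs < e / 2) sequentially"
      using order_tendstoD(2)[OF assms(3), of "e/2"] e by simp
    then obtain M where M: "infdist (x M) Cs < e / 2"
      unfolding eventually_sequentially by blast
    then obtain z where z: "z \<in> Cs" "dist (x M) z < e / 2"
      unfolding infdist_notempty[OF assms(1)] by (subst (asm) cINF_less_iff[OF assms(1)]) auto
    have "dist (x m) z < e / 2" if "m \<ge> M" for m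
      using fejer_mono[OF z(1) that] z(2) by (simp add: dist_norm)
    then have "\<forall>m\<ge>M. \<forall>n\<ge>M. dist (x m) (x n) < e"
      by (metis dist_commute dist_triangle_half_l)
    then show "\<exists>M. \<forall>m\<ge>M. \<forall>n\<ge>M. dist (x m) (x n) < e" by blast
  qed
  then obtain X where X: "x \<longlonglongrightarrow> X" using Cauchy_convergent_iff convergent_def by blast
  have "(\<lambda>n. infdist (x n) Cs) \<longlonglongrightarrow> infdist X Cs" by (intro tendsto_infdist X)
  with assms(3) have "infdist X Cs = 0" using LIMSEQ_unique by blast
  then have "X \<in> Cs" using in_closed_iff_infdist_zero[OF assms(2,1)] by simp
  with X show ?thesis by blast
qed

lemma move_bound:
  assumes "\<And>n. n \<ge> N \<Longrightarrow> d n \<le> \<delta>"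
  shows "norm (x (N + m) - x N) \<le> \<alpha> * m * \<delta>"
proof (induction m)
  case 0 then show ?case by simp
next
  case (Suc m)
  have "x (N + Suc m) - x N = (x (N + m) - x N) + \<alpha> *\<^sub>R (closest_point (S (N+m)) (x (N+m)) - x (N+m))"
    by (simp add: step)
  then have "norm (x (N + Suc m) - x N) \<le> norm (x (N + m) - x N) + \<alpha> * d (N + m)"
    using a0 by (metis abs_of_pos d_def norm_scaleR norm_triangle_ineq)
  also have "\<dots> \<le> \<alpha> * m * \<delta> + \<alpha> * \<delta>"
    using Suc assms[of "N+m"] a0 by (intro add_mono) auto
  finally show ?case by (simp add: algebra_simps)
qed

lemma window:
  assumes "Cs \<noteq> {}" "0 < \<epsilon>"
  shows "eventually (\<lambda>N. \<forall>m<L. infdist (x N) (S (N + m)) \<le> \<epsilon>) sequentially"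
proof -
  define \<delta> where "\<delta> = \<epsilon> / (1 + \<alpha> * L)"
  have \<delta>: "0 < \<delta>" unfolding \<delta>_def using a0 assms(2) by (simp add: add_pos_nonneg)
  obtain N0 where N0': "\<forall>n\<ge>N0. d n < \<delta>"
    using order_tendstoD(2)[OF d_tendsto[OF assms(1)] \<delta>] unfolding eventually_sequentially by blast
  have N0: "\<And>n. n \<ge> N0 \<Longrightarrow> d n \<le> \<delta>" using N0' by (simp add: less_imp_le)
  have "\<forall>m<L. infdist (x N) (S (N + m)) \<le> \<epsilon>" if N: "N \<ge> N0" for N
  proof safe
    fix m assume m: "m < L"
    have p: "closest_point (S (N+m)) (x (N+m)) \<in> S (N+m)" using S by (intro closest_point_in_set) auto
    have "infdist (x N) (S (N + m)) \<le> dist (x N) (closest_point (S (N+m)) (x (N+m)))"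
      by (rule infdist_le[OF p])
    also have "\<dots> \<le> norm (x (N+m) - x N) + d (N+m)"
      using dist_triangle[of "x N" "closest_point (S (N+m)) (x (N+m))" "x (N+m)"]
      by (simp add: d_def dist_norm norm_minus_commute)
    also have "\<dots> \<le> \<alpha> * m * \<delta> + \<delta>"
      using move_bound[of N \<delta> m] N0 N by (intro add_mono) auto
    also have "\<dots> \<le> \<alpha> * L * \<delta> + \<delta>"
      using m a0 \<delta> by (intro add_mono mult_right_mono mult_left_mono) auto
    also have "\<dots> = \<epsilon>"
    proof -
      have "1 + \<alpha> * L > 0" using a0 by (simp add: add_pos_nonneg)
      have "\<alpha> * L * \<delta> + \<delta> = (1 + \<alpha> * L) * \<delta>" by (simp add: algebra_simps)
      also have "\<dots> = \<epsilon>" unfolding \<delta>_def using \<open>1 + \<alpha> * L > 0\<close> by simp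
      finally show ?thesis .
    qed
    finally show "infdist (x N) (S (N + m)) \<le> \<epsilon>" .
  qed
  then show ?thesis unfolding eventually_sequentially by blast
qed

end


lemma meas_section:
  assumes "(\<lambda>(i, x). h i x) \<in> borel_measurable (N \<Otimes>\<^sub>M (borel :: 'a::topological_space measure))"
  shows "(\<lambda>i. h i x) \<in> borel_measurable N"
  using measurable_compose[OF measurable_Pair[OF measurable_ident_sets[OF refl] measurable_const[of x]] assms]
  by simp

lemma meas_iter:
  fixes C :: "'i \<Rightarrow> 'a::euclidean_space set"
  assumes g: "(\<lambda>(i, x). closest_point (C i) x) \<in> borel_measurable (\<nu> \<Otimes>\<^sub>M borel)"
    and xi: "\<And>n. \<xi> n \<in> measurable M \<nu>"
  shows "(\<lambda>\<omega>. proj_iter C \<alpha> x0 \<xi> n \<omega>) \<in> borel_measurable M"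
proof (induction n)
  case 0 then show ?case by simp
next
  case (Suc n)
  have h: "(\<lambda>\<omega>. closest_point (C (\<xi> n \<omega>)) (proj_iter C \<alpha> x0 \<xi> n \<omega>)) \<in> borel_measurable M"
    using measurable_compose[OF measurable_Pair[OF xi Suc] g] by simp
  show ?case unfolding proj_iter.simps Let_def
    by (intro borel_measurable_add borel_measurable_scaleR borel_measurable_diff borel_measurable_const h Suc)
qed

lemma AE_transfer:
  assumes f: "f \<in> measurable M N" and d: "distr M N f = N" and ae: "AE x in N. P x"
  shows "AE \<omega> in M. P (f \<omega>)"
proof -
  from ae obtain Z where Z: "{x\<in>space N. \<not> P x} \<subseteq> Z" "emeasure N Z = 0" "Z \<in> sets N"
    by (rule AE_E)
  have "emeasure M (f -` Z \<inter> space M) = emeasure (distr M N f) Z"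
    by (rule emeasure_distr[symmetric, OF f Z(3)])
  also have "\<dots> = 0" using d Z(2) by simp
  finally have null: "f -` Z \<inter> space M \<in> null_sets M"
    by (rule null_setsI[OF _ measurable_sets[OF f Z(3)]])
  show ?thesis
  proof (rule AE_I'[OF null], rule subsetI)
    fix \<omega> assume "\<omega> \<in> {\<omega> \<in> space M. \<not> P (f \<omega>)}"
    then have "\<omega> \<in> space M" "\<not> P (f \<omega>)" by auto
    moreover have "f \<omega> \<in> space N" using measurable_space[OF f \<open>\<omega> \<in> space M\<close>] .
    ultimately show "\<omega> \<in> f -` Z \<inter> space M" using Z(1) by auto
  qed
qed


lemma funpow_shift: "(seq_shift ^^ k) f = (\<lambda>n. f (k + n))"
  by (induction k arbitrary: f) (auto simp: seq_shift_def)

lemma measurable_shift_pow[measurable]: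
  "seq_shift ^^ k \<in> measurable (PiM UNIV (\<lambda>_. N)) (PiM UNIV (\<lambda>_. N))"
proof -
  have eq: "seq_shift ^^ k = (\<lambda>f n. f (k + n))" by (simp add: fun_eq_iff funpow_shift)
  show ?thesis unfolding eq
    by (rule measurable_PiM_single') (auto simp: space_PiM PiE_iff)
qed

lemma measurable_shift[measurable]:
  "seq_shift \<in> measurable (PiM UNIV (\<lambda>_. N)) (PiM UNIV (\<lambda>_. N))"
  using measurable_shift_pow[of 1 N] by simp

lemma measurable_seq[measurable]:
  assumes "\<And>n. \<xi> n \<in> measurable M N"
  shows "(\<lambda>\<omega> n. \<xi> n \<omega>) \<in> measurable M (PiM UNIV (\<lambda>_. N))"
  using assms by (intro measurable_PiM_single') (auto simp: space_PiM PiE_iff intro: measurable_space[OF assms])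

lemma stationary_pow:
  assumes "distr L (PiM UNIV (\<lambda>_. N)) seq_shift = L" "sets L = sets (PiM UNIV (\<lambda>_. N))"
  shows "distr L (PiM UNIV (\<lambda>_. N)) (seq_shift ^^ k) = L"
proof (induction k)
  case 0
  show ?case using assms(2) by (simp add: distr_id2)
next
  case (Suc k)
  have m1: "seq_shift \<in> measurable L (PiM UNIV (\<lambda>_. N))"
    using measurable_shift[of N] by (simp add: measurable_cong_sets[OF assms(2) refl])
  have "distr L (PiM UNIV (\<lambda>_. N)) (seq_shift ^^ Suc k) = distr L (PiM UNIV (\<lambda>_. N)) ((seq_shift ^^ k) \<circ> seq_shift)"
    by (simp only: funpow_Suc_right)
  also have "\<dots> = distr (distr L (PiM UNIV (\<lambda>_. N)) seq_shift) (PiM UNIV (\<lambda>_. N)) (seq_shift ^^ k)"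
    by (rule distr_distr[symmetric, OF measurable_shift_pow m1])
  also have "\<dots> = L" using Suc assms(1) by simp
  finally show ?case .
qed

lemma recurrence:
  fixes \<nu> :: "'i measure" and \<xi> :: "nat \<Rightarrow> 'w \<Rightarrow> 'i"
  assumes meas: "\<And>n. \<xi> n \<in> measurable M \<nu>"
    and erg: "ergodic_stationary M \<nu> \<xi>"
    and W: "W \<in> sets (PiM UNIV (\<lambda>_. \<nu>))"
    and Wl: "emeasure (seq_law M \<nu> \<xi>) W < 1"
  shows "AE \<omega> in M. \<forall>K. \<exists>N\<ge>K. (\<lambda>n. \<xi> (N + n) \<omega>) \<notin> W"
proof -
  define S where "S = PiM UNIV (\<lambda>_::nat. \<nu>)"
  define L where "L = seq_law M \<nu> \<xi>"
  define \<Xi> where "\<Xi> = (\<lambda>\<omega> n. \<xi> n \<omega>)"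
  have Xi[measurable]: "\<Xi> \<in> measurable M S" unfolding \<Xi>_def S_def by (rule measurable_seq[OF meas])
  have L: "L = distr M S \<Xi>" unfolding L_def seq_law_def S_def \<Xi>_def ..
  have sL: "sets L = sets S" and spL: "space L = space S" unfolding L by auto
  have stat: "distr L S seq_shift = L"
    and ergA: "\<And>A. A \<in> sets L \<Longrightarrow> seq_shift -` A \<inter> space L = A \<Longrightarrow> emeasure L A = 0 \<or> emeasure L A = 1"
    using erg unfolding ergodic_stationary_def L_def S_def Let_def by auto
  have statk: "distr L S (seq_shift ^^ k) = L" for k
    using stationary_pow[OF stat[unfolded S_def] sL[unfolded S_def]] unfolding S_def .
  define G' where "G' K = {f\<in>space S. \<forall>N\<ge>K. (seq_shift ^^ N) f \<in> W}" for K
  define G where "G = (\<Union>K. G' K)"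
  have WS[measurable]: "W \<in> sets S" using W unfolding S_def .
  have G'm: "G' K \<in> sets S" for K unfolding G'_def S_def using W by measurable
  have Gm: "G \<in> sets S" unfolding G_def using G'm by auto
  have spS: "f \<in> space S \<Longrightarrow> seq_shift f \<in> space S" for f
    using measurable_space[OF measurable_shift[of \<nu>]] unfolding S_def by blast
  have inv1: "seq_shift -` G \<inter> space L \<subseteq> G"
  proof (rule subsetI)
    fix f assume f: "f \<in> seq_shift -` G \<inter> space L"
    then obtain K where K: "\<forall>N\<ge>K. (seq_shift ^^ N) (seq_shift f) \<in> W" unfolding G_def G'_def by auto
    have "\<forall>N\<ge>Suc K. (seq_shift ^^ N) f \<in> W"
    proof safe
      fix N assume "Suc K \<le> N"
      then obtain N' where "N = Suc N'" "K \<le> N'" by (cases N) auto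
      then show "(seq_shift ^^ N) f \<in> W" using K by (auto simp del: funpow.simps simp: funpow_Suc_right)
    qed
    then show "f \<in> G" using f spL unfolding G_def G'_def by auto
  qed
  have inv2: "G \<subseteq> seq_shift -` G \<inter> space L"
  proof (rule subsetI)
    fix f assume f: "f \<in> G"
    then obtain K where K: "\<forall>N\<ge>K. (seq_shift ^^ N) f \<in> W" and fS: "f \<in> space S" unfolding G_def G'_def by auto
    have "\<forall>N\<ge>K. (seq_shift ^^ N) (seq_shift f) \<in> W"
    proof safe
      fix N assume "K \<le> N"
      have "(seq_shift ^^ N) (seq_shift f) = (seq_shift ^^ Suc N) f" by (simp only: funpow_Suc_right comp_def)
      moreover have "(seq_shift ^^ Suc N) f \<in> W" using K \<open>K \<le> N\<close> le_SucI by blast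
      ultimately show "(seq_shift ^^ N) (seq_shift f) \<in> W" by (simp only:)
    qed
    then have "seq_shift f \<in> G" using spS[OF fS] unfolding G_def G'_def by auto
    then show "f \<in> seq_shift -` G \<inter> space L" using fS spL by auto
  qed
  have inv: "seq_shift -` G \<inter> space L = G" using inv1 inv2 by (rule equalityI)
  have le: "emeasure L (G' K) \<le> emeasure L W" for K
  proof -
    have mK: "seq_shift ^^ K \<in> measurable L S"
      unfolding measurable_cong_sets[OF sL refl] S_def by (rule measurable_shift_pow)
    have sub: "G' K \<subseteq> (seq_shift ^^ K) -` W \<inter> space L" unfolding G'_def spL by blast
    have "emeasure L (G' K) \<le> emeasure L ((seq_shift ^^ K) -` W \<inter> space L)"
      by (rule emeasure_mono[OF sub measurable_sets[OF mK WS]])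
    also have "\<dots> = emeasure (distr L S (seq_shift ^^ K)) W"
      by (rule emeasure_distr[symmetric, OF mK WS])
    also have "\<dots> = emeasure L W" by (simp only: statk)
    finally show ?thesis .
  qed
  have "incseq G'" unfolding incseq_def G'_def by auto
  then have eqG: "emeasure L G = (SUP K. emeasure L (G' K))"
    unfolding G_def by (intro SUP_emeasure_incseq[symmetric]) (auto simp: sL G'm)
  have leW: "emeasure L G \<le> emeasure L W" unfolding eqG by (rule SUP_least) (rule le)
  have lt1: "emeasure L G < 1" using leW Wl unfolding L_def by (rule le_less_trans)
  then have ne1: "emeasure L G \<noteq> 1" by (rule less_imp_neq)
  have GL: "G \<in> sets L" using Gm sL by simp
  have disj: "emeasure L G = 0 \<or> emeasure L G = 1" by (rule ergA[OF GL inv])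
  have G0: "emeasure L G = 0" using disj ne1 by fast
  have "emeasure L G = emeasure M (\<Xi> -` G \<inter> space M)" unfolding L by (rule emeasure_distr[OF Xi Gm])
  with G0 have "emeasure M (\<Xi> -` G \<inter> space M) = 0" by (simp only:)
  then have null: "\<Xi> -` G \<inter> space M \<in> null_sets M"
    by (rule null_setsI[OF _ measurable_sets[OF Xi Gm]])
  show ?thesis
  proof (rule AE_I'[OF null], rule subsetI)
    fix \<omega> assume "\<omega> \<in> {\<omega> \<in> space M. \<not> (\<forall>K. \<exists>N\<ge>K. (\<lambda>n. \<xi> (N + n) \<omega>) \<notin> W)}"
    then have \<omega>: "\<omega> \<in> space M" and "\<exists>K. \<forall>N\<ge>K. (\<lambda>n. \<xi> (N + n) \<omega>) \<in> W" by auto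
    then obtain K where K: "\<forall>N\<ge>K. (\<lambda>n. \<xi> (N + n) \<omega>) \<in> W" by blast
    have "\<forall>N\<ge>K. (seq_shift ^^ N) (\<Xi> \<omega>) \<in> W"
      using K unfolding funpow_shift \<Xi>_def by simp
    moreover have "\<Xi> \<omega> \<in> space S" using measurable_space[OF Xi \<omega>] .
    ultimately have "\<Xi> \<omega> \<in> G" unfolding G_def G'_def by blast
    then show "\<omega> \<in> \<Xi> -` G \<inter> space M" using \<omega> by simp
  qed
qed


theorem theoremC:
  fixes \<nu> :: "'i measure" and C :: "'i \<Rightarrow> 'a::euclidean_space set"
    and M :: "'w measure" and \<xi> :: "nat \<Rightarrow> 'w \<Rightarrow> 'i"
    and \<alpha> :: real and x0 :: 'a
  assumes "prob_space \<nu>"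
    and "\<And>i. i \<in> space \<nu> \<Longrightarrow> C i \<noteq> {} \<and> closed (C i) \<and> convex (C i)"
    and "(\<lambda>(i, x). closest_point (C i) x) \<in> borel_measurable (\<nu> \<Otimes>\<^sub>M borel)"
    and "{x. AE i in \<nu>. x \<in> C i} \<noteq> {}"
    and "prob_space M"
    and "\<And>n. \<xi> n \<in> measurable M \<nu>"
    and "\<And>n. distr M \<nu> (\<xi> n) = \<nu>"
    and "ergodic_stationary M \<nu> \<xi>"
    and "0 < \<alpha>" and "\<alpha> < 2"
  shows "\<exists>X. X \<in> borel_measurable M \<and>
           (AE \<omega> in M. (\<lambda>n. proj_iter C \<alpha> x0 \<xi> n \<omega>) \<longlonglongrightarrow> X \<omega>) \<and>
           (AE \<omega> in M. X \<omega> \<in> {x. AE i in \<nu>. x \<in> C i})"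
proof -
  note nu = assms(1) and Cp = assms(2) and g = assms(3) and M = assms(5)
    and xi = assms(6) and dxi = assms(7) and erg = assms(8) and a0 = assms(9) and a2 = assms(10)
  define Cs where "Cs = {x. AE i in \<nu>. x \<in> C i}"
  define S where "S = PiM UNIV (\<lambda>_::nat. \<nu>)"
  define L where "L = seq_law M \<nu> \<xi>"
  define \<Xi> where "\<Xi> = (\<lambda>\<omega> n. \<xi> n \<omega>)"
  define Xn where "Xn n \<omega> = proj_iter C \<alpha> x0 \<xi> n \<omega>" for n \<omega>
  have Xi[measurable]: "\<Xi> \<in> measurable M S" unfolding \<Xi>_def S_def by (rule measurable_seq[OF xi])
  have L: "L = distr M S \<Xi>" unfolding L_def seq_law_def S_def \<Xi>_def ..
  have sL: "sets L = sets S" and spL: "space L = space S" unfolding L by auto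
  have probL: "prob_space L" unfolding L by (rule prob_space.prob_space_distr[OF M Xi])
  have Csne: "Cs \<noteq> {}" using assms(4) unfolding Cs_def .
  then obtain z0 where z0: "z0 \<in> Cs" by blast
  have Xnm: "\<And>n. (\<lambda>\<omega>. Xn n \<omega>) \<in> borel_measurable M"
    unfolding Xn_def by (rule meas_iter[OF g xi])
  have xisp: "\<And>n \<omega>. \<omega> \<in> space M \<Longrightarrow> \<xi> n \<omega> \<in> space \<nu>"
    by (rule measurable_space[OF xi])

  have Csclosed: "closed Cs"
    unfolding closed_sequential_limits
  proof (intro allI impI, elim conjE)
    fix s l assume s: "\<forall>n. s n \<in> Cs" and l: "s \<longlonglongrightarrow> l"
    have h: "AE i in \<nu>. \<forall>n. s n \<in> C i" using s unfolding Cs_def AE_all_countable by blast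
    have "AE i in \<nu>. l \<in> C i"
      using AE_space h
    proof eventually_elim
      case (elim i)
      then show ?case using closed_sequentially[of "C i" s l] Cp[of i] l by blast
    qed
    then show "l \<in> Cs" unfolding Cs_def by simp
  qed
  have CsAE: "AE i in \<nu>. Cs \<subseteq> C i"
  proof -
    obtain D where D: "countable D" "D \<subseteq> Cs" "Cs \<subseteq> closure D" by (rule separable)
    have "AE i in \<nu>. \<forall>z\<in>D. z \<in> C i"
      unfolding AE_ball_countable[OF D(1)] using D(2) unfolding Cs_def by blast
    with AE_space show ?thesis
    proof eventually_elim
      case (elim i)
      then have "closure D \<subseteq> C i" using Cp[of i] by (intro closure_minimal) auto
      then show ?case using D(3) by blast
    qed
  qed
  have CsAEM: "AE \<omega> in M. \<forall>n. Cs \<subseteq> C (\<xi> n \<omega>)"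
    unfolding AE_all_countable
    using AE_transfer[OF xi dxi CsAE] by blast

  interpret Lp: prob_space L by (rule probL)
  interpret Np: prob_space \<nu> by (rule nu)
  define hx where "hx x i = dist x (closest_point (C i) x)" for x i
  have hxm[measurable]: "(\<lambda>i. hx x i) \<in> borel_measurable \<nu>" for x
  proof -
    have "(\<lambda>i. closest_point (C i) x) \<in> borel_measurable \<nu>"
      by (rule meas_section[where h="\<lambda>i y. closest_point (C i) y", OF g])
    then show ?thesis unfolding hx_def by (rule borel_measurable_dist[OF borel_measurable_const])
  qed
  have hx_inf: "i \<in> space \<nu> \<Longrightarrow> hx x i = infdist x (C i)" for x i
    unfolding hx_def using Cp[of i] by (simp add: infdist_closest_point)
  define A where "A x e = {i \<in> space \<nu>. 2 * e < hx x i}" for x e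
  have Am[measurable]: "A x e \<in> sets \<nu>" for x e
  proof -
    have "A x e = (\<lambda>i. hx x i) -` {2 * e<..} \<inter> space \<nu>" unfolding A_def by auto
    also have "\<dots> \<in> sets \<nu>" by (rule measurable_sets[OF hxm]) simp
    finally show ?thesis .
  qed
  have exe: "\<exists>e>0. A x e \<notin> null_sets \<nu>" if nx: "x \<notin> Cs" for x
  proof (rule ccontr)
    assume H: "\<not> (\<exists>e>0. A x e \<notin> null_sets \<nu>)"
    then have nul: "A x (1 / real (Suc k)) \<in> null_sets \<nu>" for k by auto
    have U: "(\<Union>k. A x (1 / real (Suc k))) \<in> null_sets \<nu>" using nul by (intro null_sets_UN) auto
    have "AE i in \<nu>. x \<in> C i"
    proof (rule AE_I'[OF U], rule subsetI)
      fix i assume "i \<in> {i \<in> space \<nu>. x \<notin> C i}"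
      then have i: "i \<in> space \<nu>" "x \<notin> C i" by auto
      have pos: "0 < infdist x (C i)" using infdist_pos_not_in_closed[of "C i" x] Cp[OF i(1)] i(2) by auto
      then obtain k where k: "inverse (real (Suc k)) < infdist x (C i) / 2"
        using reals_Archimedean[of "infdist x (C i) / 2"] pos by auto
      then have "2 * (1 / real (Suc k)) < hx x i" using hx_inf[OF i(1)] by (simp add: field_simps)
      then show "i \<in> (\<Union>k. A x (1 / real (Suc k)))" unfolding A_def using i by blast
    qed
    then have "x \<in> Cs" unfolding Cs_def by simp
    with nx show False by simp
  qed
  define e where "e x = (SOME e. 0 < e \<and> A x e \<notin> null_sets \<nu>)" for x
  have epos: "0 < e x \<and> A x (e x) \<notin> null_sets \<nu>" if "x \<notin> Cs" for x
    using someI_ex[OF exe[OF that]] unfolding e_def by simp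
  have comp_m: "(\<lambda>f. f m) \<in> measurable S \<nu>" for m unfolding S_def
    by (rule measurable_component_singleton) simp
  have XiS: "\<omega> \<in> space M \<Longrightarrow> \<Xi> \<omega> \<in> space S" for \<omega> using measurable_space[OF Xi] .
  have shS: "\<omega> \<in> space M \<Longrightarrow> (\<lambda>n. \<xi> (N + n) \<omega>) \<in> space S" for \<omega> N
    unfolding S_def by (auto simp: space_PiM PiE_iff xisp)

  have factB: "AE \<omega> in M. \<exists>N. \<xi> N \<omega> \<in> A x (e x)" if nx: "x \<notin> Cs" for x
  proof -
    define W0 where "W0 = {f \<in> space S. f 0 \<notin> A x (e x)}"
    have W0eq: "W0 = space S - ((\<lambda>f. f 0) -` A x (e x) \<inter> space S)" unfolding W0_def by auto
    have W0m: "W0 \<in> sets S" unfolding W0eq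
      by (intro sets.Diff sets.top measurable_sets[OF comp_m Am])
    have "emeasure L W0 = emeasure M (\<Xi> -` W0 \<inter> space M)" unfolding L by (rule emeasure_distr[OF Xi W0m])
    also have "\<Xi> -` W0 \<inter> space M = \<xi> 0 -` (space \<nu> - A x (e x)) \<inter> space M"
      using XiS xisp unfolding W0_def \<Xi>_def by auto
    also have "emeasure M \<dots> = emeasure (distr M \<nu> (\<xi> 0)) (space \<nu> - A x (e x))"
      by (rule emeasure_distr[symmetric, OF xi]) (intro sets.Diff sets.top Am)
    also have "\<dots> = emeasure \<nu> (space \<nu> - A x (e x))" using dxi by simp
    finally have eq: "emeasure L W0 = emeasure \<nu> (space \<nu> - A x (e x))" .
    have "measure \<nu> (A x (e x)) \<noteq> 0"
      using epos[OF nx] Am by (simp add: Np.emeasure_eq_measure null_sets_def)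
    then have pos: "0 < measure \<nu> (A x (e x))" using measure_nonneg[of \<nu>] by (simp add: order_less_le)
    have "measure \<nu> (space \<nu> - A x (e x)) = 1 - measure \<nu> (A x (e x))"
      by (rule Np.prob_compl[OF Am])
    then have "measure \<nu> (space \<nu> - A x (e x)) < 1" using pos by simp
    then have lt: "emeasure L W0 < 1" unfolding eq Np.emeasure_eq_measure
      by (simp add: ennreal_lessI)
    have rec: "AE \<omega> in M. \<forall>K. \<exists>N\<ge>K. (\<lambda>n. \<xi> (N + n) \<omega>) \<notin> W0"
      by (rule recurrence[OF xi erg W0m[unfolded S_def] lt[unfolded L_def]])
    show ?thesis using AE_space rec
    proof eventually_elim
      case (elim \<omega>)
      then obtain N where "(\<lambda>n. \<xi> (N + n) \<omega>) \<notin> W0" by blast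
      then show ?case using shS[OF elim(1), of N] unfolding W0_def by auto
    qed
  qed
  define B where "B x l = {f \<in> space S. \<forall>m<l. f m \<notin> A x (e x)}" for x l
  define Binf where "Binf x = {f \<in> space S. \<forall>m. f m \<notin> A x (e x)}" for x
  have mm: "(\<lambda>f. f m) -` A x ee \<inter> space S \<in> sets S" for m x ee
    by (rule measurable_sets[OF comp_m Am])
  have Bm: "B x l \<in> sets S" for x l
  proof -
    have "B x l = space S - (\<Union>m\<in>{..<l}. (\<lambda>f. f m) -` A x (e x) \<inter> space S)"
      unfolding B_def by auto
    also have "\<dots> \<in> sets S"
    proof (rule sets.Diff[OF sets.top])
      show "(\<Union>m\<in>{..<l}. (\<lambda>f. f m) -` A x (e x) \<inter> space S) \<in> sets S"
        by (rule sets.finite_UN) (simp_all add: mm)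
    qed
    finally show ?thesis .
  qed
  have Binfm: "Binf x \<in> sets S" for x
  proof -
    have "Binf x = space S - (\<Union>m. (\<lambda>f. f m) -` A x (e x) \<inter> space S)"
      unfolding Binf_def by auto
    also have "\<dots> \<in> sets S"
    proof (rule sets.Diff[OF sets.top])
      show "(\<Union>m. (\<lambda>f. f m) -` A x (e x) \<inter> space S) \<in> sets S"
        by (rule sets.countable_UN) (auto simp: mm)
    qed
    finally show ?thesis .
  qed
  have factC: "measure L (Binf x) = 0" if nx: "x \<notin> Cs" for x
  proof -
    have eq: "emeasure L (Binf x) = emeasure M (\<Xi> -` Binf x \<inter> space M)"
      unfolding L by (rule emeasure_distr[OF Xi Binfm])
    from factB[OF nx] obtain Z where Z: "{\<omega>\<in>space M. \<not> (\<exists>N. \<xi> N \<omega> \<in> A x (e x))} \<subseteq> Z"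
      "emeasure M Z = 0" "Z \<in> sets M" by (rule AE_E)
    have "\<Xi> -` Binf x \<inter> space M \<subseteq> Z" using Z(1) unfolding Binf_def \<Xi>_def by auto
    then have "emeasure M (\<Xi> -` Binf x \<inter> space M) \<le> emeasure M Z" by (rule emeasure_mono[OF _ Z(3)])
    with Z(2) eq have "emeasure L (Binf x) = 0" by simp
    then show ?thesis by (simp add: measure_def)
  qed
  have Blim: "(\<lambda>l. measure L (B x l)) \<longlonglongrightarrow> 0" if nx: "x \<notin> Cs" for x
  proof -
    have dec: "decseq (B x)" unfolding decseq_def B_def by auto
    have rng: "range (B x) \<subseteq> sets L" using Bm sL by auto
    have lim: "(\<lambda>l. measure L (B x l)) \<longlonglongrightarrow> measure L (\<Inter>l. B x l)"
      by (rule Lp.finite_Lim_measure_decseq[OF rng dec])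
    have "(\<Inter>l. B x l) = Binf x"
    proof (intro equalityI subsetI)
      fix f assume f: "f \<in> (\<Inter>l. B x l)"
      have "f \<in> space S" using f unfolding B_def by blast
      moreover have "f m \<notin> A x (e x)" for m
      proof -
        have "f \<in> B x (Suc m)" using f by blast
        then show ?thesis unfolding B_def by simp
      qed
      ultimately show "f \<in> Binf x" unfolding Binf_def by simp
    next
      fix f assume "f \<in> Binf x" then show "f \<in> (\<Inter>l. B x l)" unfolding B_def Binf_def by simp
    qed
    with lim factC[OF nx] show ?thesis by simp
  qed

  define K where "K q = {x. norm (x - z0) \<le> norm (x0 - z0) \<and> inverse (real (Suc q)) \<le> infdist x Cs}" for q
  have Kc: "compact (K q)" for q
  proof -
    have "K q \<subseteq> cball z0 (norm (x0 - z0))"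
      unfolding K_def by (auto simp: dist_norm norm_minus_commute)
    then have "bounded (K q)" by (rule bounded_subset[OF bounded_cball])
    moreover have "closed (K q)" unfolding K_def
      by (intro closed_Collect_conj closed_Collect_le continuous_intros)
    ultimately show ?thesis by (simp add: compact_eq_bounded_closed)
  qed
  have Knot: "x \<in> K q \<Longrightarrow> x \<notin> Cs" for x q
  proof
    assume "x \<in> K q" "x \<in> Cs"
    then have "inverse (real (Suc q)) \<le> 0" unfolding K_def by simp
    then show False by simp
  qed
  have exF: "\<exists>F. F \<subseteq> K q \<and> finite F \<and> K q \<subseteq> (\<Union>y\<in>F. ball y (e y))" for q
  proof -
    have cov: "K q \<subseteq> (\<Union>y\<in>K q. ball y (e y))"
    proof (rule subsetI)
      fix x assume x: "x \<in> K q"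
      then have "0 < e x" using epos Knot by blast
      then show "x \<in> (\<Union>y\<in>K q. ball y (e y))" using x by (intro UN_I[of x]) auto
    qed
    have opn: "\<And>T. T \<in> K q \<Longrightarrow> open (ball T (e T))" by simp
    obtain F where "F \<subseteq> K q" "finite F" "K q \<subseteq> (\<Union>y\<in>F. ball y (e y))"
      using compactE_image[OF Kc opn cov] by blast
    then show ?thesis by blast
  qed
  have "\<forall>q. \<exists>F. F \<subseteq> K q \<and> finite F \<and> K q \<subseteq> (\<Union>y\<in>F. ball y (e y))" using exF by blast
  from choice[OF this] obtain F where
    F0: "\<forall>q. F q \<subseteq> K q \<and> finite (F q) \<and> K q \<subseteq> (\<Union>y\<in>F q. ball y (e y))" by blast
  have F: "\<And>q. F q \<subseteq> K q" "\<And>q. finite (F q)" "\<And>q. K q \<subseteq> (\<Union>y\<in>F q. ball y (e y))"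
    using F0 by blast+
  define W where "W q l = (\<Union>y\<in>F q. B y l)" for q l
  have Wm: "W q l \<in> sets S" for q l unfolding W_def using F(2) Bm by (intro sets.finite_UN) auto
  have exL: "\<exists>l. emeasure L (W q l) < 1" for q
  proof -
    have "(\<lambda>l. \<Sum>y\<in>F q. measure L (B y l)) \<longlonglongrightarrow> 0"
    proof (rule tendsto_null_sum[where f="\<lambda>l y. measure L (B y l)"])
      fix y assume "y \<in> F q"
      then have "y \<notin> Cs" using Knot F(1) by blast
      then show "(\<lambda>l. measure L (B y l)) \<longlonglongrightarrow> 0" by (rule Blim)
    qed
    from order_tendstoD(2)[OF this, of 1] obtain l where l: "(\<Sum>y\<in>F q. measure L (B y l)) < 1"
      unfolding eventually_sequentially by auto
    have "measure L (W q l) \<le> (\<Sum>y\<in>F q. measure L (B y l))"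
      unfolding W_def by (rule Lp.finite_measure_subadditive_finite[OF F(2)]) (use Bm sL in auto)
    with l have "measure L (W q l) < 1" by simp
    then have "emeasure L (W q l) < 1" unfolding Lp.emeasure_eq_measure
      using ennreal_lessI[of 1 "measure L (W q l)"] by simp
    then show ?thesis by blast
  qed
  have "\<forall>q. \<exists>l. emeasure L (W q l) < 1" using exL by blast
  from choice[OF this] obtain Lq where Lq0: "\<forall>q. emeasure L (W q (Lq q)) < 1" by blast
  have Lq: "\<And>q. emeasure L (W q (Lq q)) < 1" using Lq0 by blast
  have recq: "AE \<omega> in M. \<forall>q. \<forall>K. \<exists>N\<ge>K. (\<lambda>n. \<xi> (N + n) \<omega>) \<notin> W q (Lq q)"
  proof (rule AE_all_countable[THEN iffD2], rule allI)
    fix q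
    show "AE \<omega> in M. \<forall>K. \<exists>N\<ge>K. (\<lambda>n. \<xi> (N + n) \<omega>) \<notin> W q (Lq q)"
      by (rule recurrence[OF xi erg Wm[of q "Lq q", unfolded S_def] Lq[of q, unfolded L_def]])
  qed
  have main: "AE \<omega> in M. \<exists>X\<in>Cs. (\<lambda>n. Xn n \<omega>) \<longlonglongrightarrow> X"
    using AE_space CsAEM recq
  proof eventually_elim
    case (elim \<omega>)
    interpret D: det_seq "\<lambda>n. C (\<xi> n \<omega>)" "\<lambda>n. Xn n \<omega>" Cs \<alpha>
    proof
      show "closed (C (\<xi> n \<omega>)) \<and> convex (C (\<xi> n \<omega>)) \<and> C (\<xi> n \<omega>) \<noteq> {}" for n
        using Cp[OF xisp[OF elim(1)]] by blast
      show "Cs \<subseteq> C (\<xi> n \<omega>)" for n using elim(2) by blast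
      show "Xn (Suc n) \<omega> = Xn n \<omega> + \<alpha> *\<^sub>R (closest_point (C (\<xi> n \<omega>)) (Xn n \<omega>) - Xn n \<omega>)" for n
        by (simp add: Xn_def Let_def)
    qed (use a0 a2 in auto)
    define r where "r n = infdist (Xn n \<omega>) Cs" for n
    have decr: "decseq r" unfolding r_def using D.infdist_dec[OF Csne] by (intro decseq_SucI) simp
    obtain \<rho> where \<rho>: "r \<longlonglongrightarrow> \<rho>" "\<forall>i. \<rho> \<le> r i"
      using decseq_convergent[OF decr, of 0] unfolding r_def using infdist_nonneg by blast
    have \<rho>0: "0 \<le> \<rho>" by (rule LIMSEQ_le_const[OF \<rho>(1)]) (auto simp: r_def infdist_nonneg)
    show ?case
    proof (cases "\<rho> = 0")
      case True
      then show ?thesis using D.conv_Cs[OF Csne Csclosed] \<rho>(1) unfolding r_def by simp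
    next
      case False
      then have \<rho>pos: "0 < \<rho>" using \<rho>0 by simp
      obtain q where q: "inverse (real (Suc q)) < \<rho>" using reals_Archimedean[OF \<rho>pos] by auto
      have inK: "Xn N \<omega> \<in> K q" for N
      proof -
        have "norm (Xn N \<omega> - z0) \<le> norm (Xn 0 \<omega> - z0)" using D.fejer_mono[OF z0, of 0 N] by simp
        moreover have "Xn 0 \<omega> = x0" by (simp add: Xn_def)
        moreover have "inverse (real (Suc q)) \<le> infdist (Xn N \<omega>) Cs" using q \<rho>(2) unfolding r_def
          by (metis less_le_trans less_imp_le)
        ultimately show ?thesis unfolding K_def by simp
      qed
      define \<epsilon> where "\<epsilon> = Min (insert 1 (e ` F q))"
      have epF: "y \<in> F q \<Longrightarrow> 0 < e y" for y using epos Knot F(1) by blast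
      have \<epsilon>pos: "0 < \<epsilon>" unfolding \<epsilon>_def using F(2) epF by (subst Min_gr_iff) auto
      have \<epsilon>le: "y \<in> F q \<Longrightarrow> \<epsilon> \<le> e y" for y unfolding \<epsilon>_def using F(2) by (intro Min_le) auto
      from D.window[OF Csne \<epsilon>pos, of "Lq q"] obtain N0 where
        N0: "\<forall>N\<ge>N0. \<forall>m<Lq q. infdist (Xn N \<omega>) (C (\<xi> (N + m) \<omega>)) \<le> \<epsilon>"
        unfolding eventually_sequentially by auto
      from elim(3) obtain N where N: "N \<ge> N0" "(\<lambda>n. \<xi> (N + n) \<omega>) \<notin> W q (Lq q)" by blast
      from inK[of N] F(3)[of q] obtain y where y: "y \<in> F q" "dist y (Xn N \<omega>) < e y" by auto
      have "(\<lambda>n. \<xi> (N + n) \<omega>) \<in> B y (Lq q)"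
        unfolding B_def
      proof (intro CollectI conjI allI impI)
        show "(\<lambda>n. \<xi> (N + n) \<omega>) \<in> space S" by (rule shS[OF elim(1)])
        fix m assume m: "m < Lq q"
        have i: "\<xi> (N + m) \<omega> \<in> space \<nu>" by (rule xisp[OF elim(1)])
        have "hx y (\<xi> (N + m) \<omega>) = infdist y (C (\<xi> (N + m) \<omega>))" by (rule hx_inf[OF i])
        also have "\<dots> \<le> infdist (Xn N \<omega>) (C (\<xi> (N + m) \<omega>)) + dist y (Xn N \<omega>)" by (rule infdist_triangle)
        also have "\<dots> < \<epsilon> + e y" using N0 N(1) m y(2) by (intro add_le_less_mono) auto
        also have "\<dots> \<le> 2 * e y" using \<epsilon>le[OF y(1)] by simp
        finally show "(\<lambda>n. \<xi> (N + n) \<omega>) m \<notin> A y (e y)" unfolding A_def by simp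
      qed
      then have "(\<lambda>n. \<xi> (N + n) \<omega>) \<in> W q (Lq q)" unfolding W_def using y(1) by blast
      with N(2) show ?thesis by blast
    qed
  qed

  define X where "X \<omega> = lim (\<lambda>n. Xn n \<omega>)" for \<omega>
  have Xm: "X \<in> borel_measurable M" unfolding X_def by (rule borel_measurable_lim_metric[OF Xnm])
  have conv_in: "(\<lambda>n. Xn n \<omega>) \<longlonglongrightarrow> X \<omega> \<and> X \<omega> \<in> Cs" if "\<exists>X\<in>Cs. (\<lambda>n. Xn n \<omega>) \<longlonglongrightarrow> X" for \<omega>
  proof -
    from that obtain Y where Y: "Y \<in> Cs" "(\<lambda>n. Xn n \<omega>) \<longlonglongrightarrow> Y" by blast
    have "X \<omega> = Y" unfolding X_def by (rule limI[OF Y(2)])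
    with Y show ?thesis by simp
  qed
  have conv: "AE \<omega> in M. (\<lambda>n. Xn n \<omega>) \<longlonglongrightarrow> X \<omega>"
    using main by (rule AE_mp) (use conv_in in blast)
  have inCs: "AE \<omega> in M. X \<omega> \<in> Cs"
    using main by (rule AE_mp) (use conv_in in blast)
  show ?thesis using Xm conv inCs unfolding Xn_def Cs_def by blast
qed

end
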